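(* Let $\alpha_1\le\dots\le\alpha_r$ and $\beta_1\le\dots\le\beta_{r+1}$ be positive real numbers such that $\alpha_i\ge\beta_{i+1}$ for $i=1,\dots,r$ and $\sum_{i=1}^r\alpha_i=\sum_{i=1}^{r+1}\beta_i$. Then $\sum_{i=1}^{r+1}\beta_i^2\le\sum_{i=1}^r\alpha_i^2$, with equality if and only if $\alpha_i=\beta_{i+1}$ for all $i=1,\dots,r$. *)

theory Defs
  imports Main "HOL.Real"
begin

end

theory Submission
  imports Defs
begin

lemma shift_sum: "(\<Sum>i=1..(r::nat)+1. f i) = (f 1::real) + (\<Sum>i=1..r. f (i+1))"
  by (induction r) (auto simp: add.assoc)

lemma b_ge: assumes "\<And>i. 1 \<le> i \<Longrightarrow> i < r + 1 \<Longrightarrow> (b::nat\<Rightarrow>real) i \<le> b (i + 1)"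
  shows "1 \<le> j \<Longrightarrow> j \<le> r + 1 \<Longrightarrow> b 1 \<le> b j"
proof (induction j)
  case 0 then show ?case by simp
next
  case (Suc j)
  show ?case
  proof (cases "j = 0")
    case True then show ?thesis by simp
  next
    case False
    then have "b 1 \<le> b j" using Suc by simp
    also have "b j \<le> b (j+1)" using assms[of j] False Suc.prems by simp
    finally show ?thesis by simp
  qed
qed

theorem lemma2p5:
  fixes r :: nat and a b :: "nat \<Rightarrow> real"
  assumes a_pos: "\<And>i. 1 \<le> i \<Longrightarrow> i \<le> r \<Longrightarrow> a i > 0"
    and b_pos: "\<And>i. 1 \<le> i \<Longrightarrow> i \<le> r + 1 \<Longrightarrow> b i > 0"
    and a_mono: "\<And>i. 1 \<le> i \<Longrightarrow> i < r \<Longrightarrow> a i \<le> a (i + 1)"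
    and b_mono: "\<And>i. 1 \<le> i \<Longrightarrow> i < r + 1 \<Longrightarrow> b i \<le> b (i + 1)"
    and interlace: "\<And>i. 1 \<le> i \<Longrightarrow> i \<le> r \<Longrightarrow> a i \<ge> b (i + 1)"
    and sum_eq: "(\<Sum>i=1..r. a i) = (\<Sum>i=1..r+1. b i)"
  shows "(\<Sum>i=1..r+1. (b i)^2) \<le> (\<Sum>i=1..r. (a i)^2)
    \<and> ((\<Sum>i=1..r+1. (b i)^2) = (\<Sum>i=1..r. (a i)^2)
         \<longleftrightarrow> (\<forall>i. 1 \<le> i \<and> i \<le> r \<longrightarrow> a i = b (i + 1)))"
proof -
  have b1: "b 1 > 0" using b_pos[of 1] by simp
  have S: "(\<Sum>i=1..r. a i - b (i+1)) = b 1"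
    using sum_eq shift_sum[of b r] by (simp add: sum_subtractf)
  have key: "(\<Sum>i=1..r. (a i)^2) - (\<Sum>i=1..r. (b (i+1))^2)
      = (\<Sum>i=1..r. (a i - b (i+1)) * (a i + b (i+1)))"
    by (simp add: sum_subtractf[symmetric] power2_eq_square algebra_simps)
  have "(\<Sum>i=1..r. (a i - b (i+1)) * (2 * b 1)) \<le> (\<Sum>i=1..r. (a i - b (i+1)) * (a i + b (i+1)))"
  proof (rule sum_mono)
    fix i assume i: "i \<in> {1..r}"
    have "b 1 \<le> b (i+1)" using b_ge[of r b "i+1", OF b_mono] i by simp
    moreover have "b (i+1) \<le> a i" "0 < b 1" using interlace[of i] i b1 by auto
    ultimately show "(a i - b (i+1)) * (2 * b 1) \<le> (a i - b (i+1)) * (a i + b (i+1))"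
      by (intro mult_left_mono) auto
  qed
  moreover have "(\<Sum>i=1..r. (a i - b (i+1)) * (2 * b 1)) = 2 * (b 1)^2"
    using S by (simp add: sum_distrib_right[symmetric] power2_eq_square)
  ultimately have strict: "(\<Sum>i=1..r+1. (b i)^2) < (\<Sum>i=1..r. (a i)^2)"
  proof -
    assume h1: "(\<Sum>i=1..r. (a i - b (i+1)) * (2 * b 1)) \<le> (\<Sum>i=1..r. (a i - b (i+1)) * (a i + b (i+1)))"
      and h2: "(\<Sum>i=1..r. (a i - b (i+1)) * (2 * b 1)) = 2 * (b 1)^2"
    have "(b 1)^2 > 0" using b1 by simp
    then show ?thesis using h1 h2 key shift_sum[of "\<lambda>i. (b i)^2" r] by linarith
  qed
  moreover have "\<not> (\<forall>i. 1 \<le> i \<and> i \<le> r \<longrightarrow> a i = b (i + 1))"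
  proof
    assume "\<forall>i. 1 \<le> i \<and> i \<le> r \<longrightarrow> a i = b (i + 1)"
    then have "(\<Sum>i=1..r. a i - b (i+1)) = 0" by simp
    with S b1 show False by simp
  qed
  ultimately show ?thesis by simp
qed

end
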